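(* Let $H$ be a fixed graph and $s$ a fixed positive integer. Let $G$ be an $n$-vertex graph not containing $M_{s+1}$ (a matching of $s+1$ pairwise disjoint edges) as a subgraph, and let $B\subseteq V(G)$ be a set such that every connected component of $G-B$ has an odd number of vertices and, writing $A_1,\dots,A_m$ for the vertex sets of these components, $|B|+\sum_{i=1}^m \frac{|A_i|-1}{2}\le s$. Then, as $n\to\infty$ (with the implied constants depending only on $H$ and $s$): (i) every vertex $v\in V(G)\setminus B$ is contained in $O(n^{\alpha(H)-1})$ copies of $H$ in $G$; (ii) the number of copies of $H$ in $G$ that contain at least one edge with both endpoints outside $B$ is $O(n^{\alpha(H)-1})$.
   Context: All graphs are finite and simple. $\alpha(H)$ denotes the independence number of $H$ (the largest order of an independent set in $H$). A copy of $H$ in $G$ is a subgraph of $G$ isomorphic to $H$. By the Berge–Tutte theorem, a set $B$ as in the statement exists for every $M_{s+1}$-free graph $G$. *)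

theory Defs
  imports Complex_Main
begin

definition graph :: "'a set \<Rightarrow> 'a set set \<Rightarrow> bool" where
  "graph V E \<longleftrightarrow> finite V \<and> (\<forall>e\<in>E. \<exists>x y. e = {x, y} \<and> x \<noteq> y \<and> x \<in> V \<and> y \<in> V)"

definition independent_set :: "'a set \<Rightarrow> 'a set set \<Rightarrow> 'a set \<Rightarrow> bool" where
  "independent_set V E S \<longleftrightarrow> S \<subseteq> V \<and> (\<forall>e\<in>E. \<not> e \<subseteq> S)"

definition alpha :: "'a set \<Rightarrow> 'a set set \<Rightarrow> nat" where
  "alpha V E = Max (card ` {S. independent_set V E S})"

definition has_matching :: "'a set set \<Rightarrow> nat \<Rightarrow> bool" where
  "has_matching E k \<longleftrightarrow> (\<exists>M. M \<subseteq> E \<and> card M = k \<and> finite M \<and>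
       (\<forall>e\<in>M. \<forall>f\<in>M. e \<noteq> f \<longrightarrow> e \<inter> f = {}))"

definition del_vertices_edges :: "'a set set \<Rightarrow> 'a set \<Rightarrow> 'a set set" where
  "del_vertices_edges E B = {e \<in> E. e \<inter> B = {}}"

definition reachable :: "'a set \<Rightarrow> 'a set set \<Rightarrow> 'a \<Rightarrow> 'a \<Rightarrow> bool" where
  "reachable V E = (\<lambda>x y. x \<in> V \<and> y \<in> V \<and> {x, y} \<in> E)\<^sup>*\<^sup>*"

definition components :: "'a set \<Rightarrow> 'a set set \<Rightarrow> 'a set set" where
  "components V E = {{u \<in> V. reachable V E v u} | v. v \<in> V}"

definition copies :: "'b set \<Rightarrow> 'b set set \<Rightarrow> 'a set \<Rightarrow> 'a set set \<Rightarrow> ('a set \<times> 'a set set) set" where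
  "copies VH EH V E = {(V', E'). V' \<subseteq> V \<and> E' \<subseteq> E \<and> (\<forall>e\<in>E'. e \<subseteq> V') \<and>
      (\<exists>f. bij_betw f VH V' \<and> (\<forall>x\<in>VH. \<forall>y\<in>VH. {x, y} \<in> EH \<longleftrightarrow> {f x, f y} \<in> E'))}"

end

theory Submission
  imports Defs "HOL-Library.FuncSet"
begin


lemma count_funs:
  fixes VH :: "'b set" and P Q :: "'a set"
  assumes fin: "finite VH" "finite P" "finite Q" and cP: "card P \<le> n" and cQ: "card Q \<le> M"
    and n1: "1 \<le> n" and M1: "1 \<le> M"
  shows "card {f \<in> VH \<rightarrow>\<^sub>E (P \<union> Q). card {x\<in>VH. f x \<in> P} \<le> d} \<le> 2 ^ card VH * (n ^ d * M ^ card VH)"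
proof -
  let ?I = "{S. S \<subseteq> VH \<and> card S \<le> d}"
  let ?U = "\<Union>S\<in>?I. PiE VH (\<lambda>x. if x\<in>S then P else Q)"
  have finI: "finite ?I" by (rule finite_subset[of _ "Pow VH"]) (auto simp: fin)
  have sub: "{f \<in> VH \<rightarrow>\<^sub>E (P \<union> Q). card {x\<in>VH. f x \<in> P} \<le> d} \<subseteq> ?U"
  proof
    fix f assume f: "f \<in> {f \<in> VH \<rightarrow>\<^sub>E (P \<union> Q). card {x\<in>VH. f x \<in> P} \<le> d}"
    let ?S = "{x\<in>VH. f x \<in> P}"
    have "f \<in> PiE VH (\<lambda>x. if x\<in>?S then P else Q)" using f by (auto simp: PiE_iff)
    moreover have "?S \<in> ?I" using f by auto
    ultimately show "f \<in> ?U" by blast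
  qed
  have finU: "finite ?U" using finI fin by (auto intro!: finite_PiE)
  have each: "card (PiE VH (\<lambda>x. if x\<in>S then P else Q)) \<le> n ^ d * M ^ card VH" if S: "S \<in> ?I" for S
  proof -
    have "card (PiE VH (\<lambda>x. if x\<in>S then P else Q)) = (\<Prod>x\<in>VH. card (if x\<in>S then P else Q))"
      using fin(1) by (rule card_PiE)
    also have "\<dots> \<le> (\<Prod>x\<in>VH. (if x\<in>S then n else M))"
      by (rule prod_mono) (use cP cQ in auto)
    also have "\<dots> = n ^ card (VH \<inter> {x. x\<in>S}) * M ^ card (VH \<inter> - {x. x\<in>S})"
      using fin(1) by (simp add: prod.If_cases)
    also have "\<dots> \<le> n ^ d * M ^ card VH"
    proof (rule mult_le_mono)
      have "card (VH \<inter> {x. x\<in>S}) \<le> d" using S by (simp add: Int_absorb1)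
      then show "n ^ card (VH \<inter> {x. x\<in>S}) \<le> n ^ d" using n1 by (rule power_increasing)
      have "card (VH \<inter> - {x. x\<in>S}) \<le> card VH" using fin(1) by (intro card_mono) auto
      then show "M ^ card (VH \<inter> - {x. x\<in>S}) \<le> M ^ card VH" using M1 by (rule power_increasing)
    qed
    finally show ?thesis .
  qed
  have "card {f \<in> VH \<rightarrow>\<^sub>E (P \<union> Q). card {x\<in>VH. f x \<in> P} \<le> d} \<le> card ?U"
    by (rule card_mono[OF finU sub])
  also have "\<dots> \<le> (\<Sum>S\<in>?I. card (PiE VH (\<lambda>x. if x\<in>S then P else Q)))"
    by (rule card_UN_le[OF finI])
  also have "\<dots> \<le> (\<Sum>S\<in>?I. n ^ d * M ^ card VH)" by (rule sum_mono) (rule each)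
  also have "\<dots> = card ?I * (n ^ d * M ^ card VH)" by simp
  also have "\<dots> \<le> 2 ^ card VH * (n ^ d * M ^ card VH)"
  proof (rule mult_le_mono1)
    have "card ?I \<le> card (Pow VH)" using fin(1) by (intro card_mono) auto
    then show "card ?I \<le> 2 ^ card VH" using fin(1) by (simp add: card_Pow)
  qed
  finally show ?thesis .
qed


lemma graph_edge:
  assumes "graph V E" "{x, y} \<in> E"
  shows "x \<in> V" "y \<in> V" "x \<noteq> y"
proof -
  obtain p q where "{x, y} = {p, q}" "p \<noteq> q" "p \<in> V" "q \<in> V"
    using assms unfolding graph_def by blast
  then show "x \<in> V" "y \<in> V" "x \<noteq> y" by (auto simp: doubleton_eq_iff)
qed

lemma alpha_ge:
  assumes "graph VH EH" "independent_set VH EH S"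
  shows "card S \<le> alpha VH EH"
proof -
  have fin: "finite VH" using assms(1) by (simp add: graph_def)
  have sub: "{S. independent_set VH EH S} \<subseteq> Pow VH" by (auto simp: independent_set_def)
  have "finite {S. independent_set VH EH S}"
    by (rule finite_subset[OF sub]) (simp add: fin)
  then have "finite (card ` {S. independent_set VH EH S})" by (rule finite_imageI)
  moreover have "card S \<in> card ` {S. independent_set VH EH S}" using assms(2) by blast
  ultimately show ?thesis unfolding alpha_def by (rule Max_ge)
qed

lemma key2:
  assumes gH: "graph VH EH"
    and fwd: "\<forall>x\<in>VH. \<forall>y\<in>VH. {x,y} \<in> EH \<longrightarrow> {f x, f y} \<in> E"
    and Pp: "\<forall>p\<in>P. \<forall>y. {p,y} \<in> E \<longrightarrow> y \<in> B" and PB: "P \<inter> B = {}"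
    and u: "u \<in> VH" "f u \<notin> B" "f u \<notin> P"
  shows "card {x\<in>VH. f x \<in> P} \<le> alpha VH EH - 1"
proof -
  let ?S = "{x\<in>VH. f x \<in> P}"
  have fin: "finite VH" using gH by (simp add: graph_def)
  have ind: "independent_set VH EH (?S \<union> {u})"
    unfolding independent_set_def
  proof (intro conjI ballI notI)
    show "?S \<union> {u} \<subseteq> VH" using u by auto
  next
    fix e assume e: "e \<in> EH" and sub: "e \<subseteq> ?S \<union> {u}"
    obtain x y where xy: "e = {x,y}" "x \<noteq> y" "x \<in> VH" "y \<in> VH"
      using gH e unfolding graph_def by blast
    have E1: "{f x, f y} \<in> E" using fwd xy e by auto
    have E2: "{f y, f x} \<in> E" using E1 by (simp add: insert_commute)
    show False
    proof (cases "x \<in> ?S")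
      case True
      then have "f y \<in> B" using Pp E1 by auto
      have "y \<in> ?S \<union> {u}" using sub xy by blast
      then show False using \<open>f y \<in> B\<close> PB u by blast
    next
      case False
      have "x \<in> ?S \<union> {u}" "y \<in> ?S \<union> {u}" using sub xy by blast+
      then have "x = u" "y \<in> ?S" using False xy(2) by blast+
      then have "f x \<in> B" using Pp E2 by auto
      then show False using \<open>x = u\<close> u by simp
    qed
  qed
  have "card (?S \<union> {u}) = card ?S + 1" using u fin by simp
  moreover have "card (?S \<union> {u}) \<le> alpha VH EH" by (rule alpha_ge[OF gH ind])
  ultimately show ?thesis by simp
qed

definition Phi :: "'b set \<Rightarrow> 'b set set \<Rightarrow> ('b \<Rightarrow> 'a) \<Rightarrow> 'a set \<times> 'a set set" where
  "Phi VH EH f = (f ` VH, {{f x, f y} | x y. x \<in> VH \<and> y \<in> VH \<and> {x, y} \<in> EH})"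

lemma copy_repr:
  assumes c: "c \<in> copies VH EH V E" and g: "graph V E"
  shows "\<exists>f. f \<in> VH \<rightarrow>\<^sub>E V \<and> c = Phi VH EH f \<and>
     (\<forall>x\<in>VH. \<forall>y\<in>VH. {x,y} \<in> EH \<longrightarrow> {f x, f y} \<in> E)"
proof -
  obtain V' E' f where cc: "c = (V', E')" and V': "V' \<subseteq> V" and E': "E' \<subseteq> E" "\<forall>e\<in>E'. e \<subseteq> V'"
    and bij: "bij_betw f VH V'" and iff: "\<forall>x\<in>VH. \<forall>y\<in>VH. {x, y} \<in> EH \<longleftrightarrow> {f x, f y} \<in> E'"
    using c unfolding copies_def by blast
  let ?g = "restrict f VH"
  have img: "f ` VH = V'" using bij by (simp add: bij_betw_def)
  have "?g \<in> VH \<rightarrow>\<^sub>E V" using img V' by auto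
  moreover have "E' = {{f x, f y} | x y. x \<in> VH \<and> y \<in> VH \<and> {x, y} \<in> EH}"
  proof
    show "E' \<subseteq> {{f x, f y} | x y. x \<in> VH \<and> y \<in> VH \<and> {x, y} \<in> EH}"
    proof
      fix e assume e: "e \<in> E'"
      then obtain p q where pq: "e = {p,q}" using E' g unfolding graph_def by blast
      then have "p \<in> V'" "q \<in> V'" using E' e by auto
      then obtain x y where "x \<in> VH" "y \<in> VH" "p = f x" "q = f y" using img by blast
      then have "{x, y} \<in> EH" using iff e pq by simp
      then show "e \<in> {{f x, f y} | x y. x \<in> VH \<and> y \<in> VH \<and> {x, y} \<in> EH}"
        using \<open>x \<in> VH\<close> \<open>y \<in> VH\<close> \<open>p = f x\<close> \<open>q = f y\<close> pq by blast
    qed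
    show "{{f x, f y} | x y. x \<in> VH \<and> y \<in> VH \<and> {x, y} \<in> EH} \<subseteq> E'"
    proof
      fix e assume "e \<in> {{f x, f y} | x y. x \<in> VH \<and> y \<in> VH \<and> {x, y} \<in> EH}"
      then obtain x y where "e = {f x, f y}" "x \<in> VH" "y \<in> VH" "{x, y} \<in> EH" by blast
      then show "e \<in> E'" using iff by simp
    qed
  qed
  moreover have "{{?g x, ?g y} | x y. x \<in> VH \<and> y \<in> VH \<and> {x, y} \<in> EH}
      = {{f x, f y} | x y. x \<in> VH \<and> y \<in> VH \<and> {x, y} \<in> EH}"
    by (auto; metis restrict_apply')
  moreover have "?g ` VH = f ` VH" by simp
  ultimately have "c = Phi VH EH ?g" using cc img unfolding Phi_def by simp
  moreover have "\<forall>x\<in>VH. \<forall>y\<in>VH. {x,y} \<in> EH \<longrightarrow> {?g x, ?g y} \<in> E" using iff E' by auto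
  ultimately show ?thesis using \<open>?g \<in> VH \<rightarrow>\<^sub>E V\<close> by blast
qed




lemma T_bound:
  assumes g: "graph V E" and BV: "B \<subseteq> V"
    and sumc: "real (card B) + (\<Sum>A\<in>components (V - B) (del_vertices_edges E B). (real (card A) - 1) / 2) \<le> real s"
  shows "card (V - {x\<in>V-B. \<forall>y. {x,y}\<in>E \<longrightarrow> y\<in>B}) \<le> 4*s"
proof -
  define E' where "E' = del_vertices_edges E B"
  define C where "C = components (V - B) E'"
  define C2 where "C2 = {A\<in>C. 2 \<le> card A}"
  define X where "X = {x\<in>V-B. \<exists>y. {x,y}\<in>E \<and> y\<notin>B}"
  have finV: "finite V" using g by (simp add: graph_def)
  have CV: "C \<subseteq> Pow V" unfolding C_def components_def by auto
  have finC: "finite C" by (rule finite_subset[OF CV]) (simp add: finV)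
  have Cne: "1 \<le> card A" if AinC: "A \<in> C" for A
  proof -
    obtain v where v: "v \<in> V - B" "A = {u \<in> V - B. reachable (V - B) E' v u}"
      using AinC unfolding C_def components_def by blast
    have "v \<in> A" using v unfolding reachable_def by simp
    moreover have "finite A" using AinC CV finV by (meson PowD finite_subset subsetD)
    ultimately have "0 < card A" by (auto simp: card_gt_0_iff)
    then show ?thesis by simp
  qed
  have XC: "X \<subseteq> \<Union>C2"
  proof
    fix x assume "x \<in> X"
    then obtain y where xy: "x \<in> V - B" "{x,y} \<in> E" "y \<notin> B" unfolding X_def by blast
    have yV: "y \<in> V" and xy_ne: "x \<noteq> y" using graph_edge[OF g xy(2)] by auto
    have "{x,y} \<in> E'" using xy unfolding E'_def del_vertices_edges_def by auto
    define A where "A = {u \<in> V - B. reachable (V - B) E' x u}"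
    have AC: "A \<in> C" unfolding C_def components_def A_def using xy(1) by blast
    have xA: "x \<in> A" using xy(1) unfolding A_def reachable_def by simp
    have yA: "y \<in> A" using xy yV \<open>{x,y} \<in> E'\<close> unfolding A_def reachable_def
      by (auto intro: r_into_rtranclp)
    have "finite A" using AC CV finV by (meson PowD finite_subset subsetD)
    then have "card {x,y} \<le> card A" using xA yA by (intro card_mono) auto
    then have "2 \<le> card A" using xy_ne by simp
    then show "x \<in> \<Union>C2" using AC xA unfolding C2_def by blast
  qed
  have VI: "V - {x\<in>V-B. \<forall>y. {x,y}\<in>E \<longrightarrow> y\<in>B} \<subseteq> B \<union> X" unfolding X_def by blast
  have "card (V - {x\<in>V-B. \<forall>y. {x,y}\<in>E \<longrightarrow> y\<in>B}) \<le> card (B \<union> X)"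
  proof (rule card_mono[OF _ VI])
    have "B \<union> X \<subseteq> V" using BV unfolding X_def by blast
    then show "finite (B \<union> X)" using finV by (rule finite_subset)
  qed
  also have "\<dots> \<le> card B + card X" by (rule card_Un_le)
  finally have c1: "card (V - {x\<in>V-B. \<forall>y. {x,y}\<in>E \<longrightarrow> y\<in>B}) \<le> card B + card X" .
  have "\<Union>C2 \<subseteq> V" using CV unfolding C2_def by blast
  then have "card X \<le> card (\<Union>C2)" using XC finV by (meson card_mono finite_subset)
  also have "\<dots> \<le> sum card C2" by (rule card_Union_le_sum_card)
  finally have "real (card X) \<le> real (sum card C2)" by (simp only: of_nat_le_iff)
  then have c2: "real (card X) \<le> (\<Sum>A\<in>C2. real (card A))" by (simp add: of_nat_sum)
  have finC2: "finite C2" using finC unfolding C2_def by simp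
  have "(\<Sum>A\<in>C2. real (card A)) \<le> (\<Sum>A\<in>C2. 4 * ((real (card A) - 1) / 2))"
    by (rule sum_mono) (auto simp: C2_def)
  also have "\<dots> \<le> (\<Sum>A\<in>C. 4 * ((real (card A) - 1) / 2))"
  proof (rule sum_mono2[OF finC])
    show "C2 \<subseteq> C" unfolding C2_def by blast
    fix A assume "A \<in> C - C2"
    then have "1 \<le> card A" using Cne by blast
    then show "0 \<le> 4 * ((real (card A) - 1) / 2)" by simp
  qed
  also have "\<dots> = 4 * (\<Sum>A\<in>C. (real (card A) - 1) / 2)" by (simp add: sum_distrib_left)
  finally have c3: "real (card X) \<le> 4 * (\<Sum>A\<in>C. (real (card A) - 1) / 2)" using c2 by linarith
  have "real (card (V - {x\<in>V-B. \<forall>y. {x,y}\<in>E \<longrightarrow> y\<in>B})) \<le> 4 * real s"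
    using c1 c3 sumc unfolding C_def E'_def by linarith
  then show ?thesis by linarith
qed



lemma count_copies:
  assumes PV: "P \<subseteq> V" and finV: "finite V" and finQ: "finite Q" and cQ: "card Q \<le> M"
    and VPQ: "V \<subseteq> P \<union> Q" and n1: "1 \<le> card V" and M1: "1 \<le> M" and finH: "finite VH"
    and Y: "\<forall>c\<in>Y. \<exists>f. f \<in> VH \<rightarrow>\<^sub>E V \<and> c = Phi VH EH f \<and> card {x\<in>VH. f x \<in> P} \<le> d"
  shows "card Y \<le> 2 ^ card VH * (card V ^ d * M ^ card VH)"
proof -
  define F where "F = {f \<in> VH \<rightarrow>\<^sub>E V. card {x\<in>VH. f x \<in> P} \<le> d}"
  define G where "G = {f \<in> VH \<rightarrow>\<^sub>E (P \<union> Q). card {x\<in>VH. f x \<in> P} \<le> d}"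
  have YF: "Y \<subseteq> Phi VH EH ` F" using Y unfolding F_def by blast
  have FG: "F \<subseteq> G" unfolding F_def G_def using PiE_mono[of VH "\<lambda>_. V" "\<lambda>_. P \<union> Q"] VPQ by blast
  have finP: "finite P" using PV finV by (rule finite_subset)
  have finG: "finite G" unfolding G_def
    by (rule finite_subset[of _ "VH \<rightarrow>\<^sub>E (P \<union> Q)"]) (auto intro!: finite_PiE simp: finH finP finQ)
  have finF: "finite F" using FG finG by (rule finite_subset)
  have "card Y \<le> card (Phi VH EH ` F)" using YF finF by (intro card_mono) auto
  also have "\<dots> \<le> card F" by (rule card_image_le[OF finF])
  also have "\<dots> \<le> card G" using FG finG by (rule card_mono[rotated])
  also have "\<dots> \<le> 2 ^ card VH * (card V ^ d * M ^ card VH)" unfolding G_def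
    by (rule count_funs[OF finH finP finQ card_mono[OF finV PV] cQ n1 M1])
  finally show ?thesis .
qed



theorem mainTheorem1:
  fixes VH :: "'b set" and EH :: "'b set set" and s :: nat
  assumes "graph VH EH" and "VH \<noteq> {}" and "s > 0"
  shows "\<exists>C::real. \<exists>N::nat. \<forall>(V::nat set) E B.
    graph V E \<and> card V \<ge> N \<and> \<not> has_matching E (Suc s) \<and> B \<subseteq> V \<and>
    (\<forall>A\<in>components (V - B) (del_vertices_edges E B). odd (card A)) \<and>
    real (card B) + (\<Sum>A\<in>components (V - B) (del_vertices_edges E B). (real (card A) - 1) / 2) \<le> real s
    \<longrightarrow>
      (\<forall>v\<in>V - B. real (card {c\<in>copies VH EH V E. v \<in> fst c})
            \<le> C * real (card V) ^ (alpha VH EH - 1)) \<and>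
      real (card {c\<in>copies VH EH V E. \<exists>e\<in>snd c. e \<inter> B = {}})
            \<le> C * real (card V) ^ (alpha VH EH - 1)"
proof -
  note gH = assms(1)
  have finH: "finite VH" using gH by (simp add: graph_def)
  define k where "k = card VH"
  define M where "M = 4 * s + 2"
  define a where "a = alpha VH EH"
  have M1: "1 \<le> M" unfolding M_def by simp
  have fin_bound: "real (card Y) \<le> real (2 ^ k * M ^ k) * real n ^ (a - 1)"
    if "card Y \<le> 2 ^ k * (n ^ (a - 1) * M ^ k)" for Y :: "'c set" and n
  proof -
    have "real (card Y) \<le> real (2 ^ k * (n ^ (a - 1) * M ^ k))" using that by (simp only: of_nat_le_iff)
    then show ?thesis by (simp add: algebra_simps)
  qed
  show ?thesis
  proof (intro exI[of _ "real (2 ^ k * M ^ k)"] exI[of _ "1::nat"] allI impI)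
    fix V :: "nat set" and E B
    assume H: "graph V E \<and> 1 \<le> card V \<and> \<not> has_matching E (Suc s) \<and> B \<subseteq> V \<and>
      (\<forall>A\<in>components (V - B) (del_vertices_edges E B). odd (card A)) \<and>
      real (card B) + (\<Sum>A\<in>components (V - B) (del_vertices_edges E B). (real (card A) - 1) / 2) \<le> real s"
    then have g: "graph V E" and n1: "1 \<le> card V" and BV: "B \<subseteq> V"
      and sumc: "real (card B) + (\<Sum>A\<in>components (V - B) (del_vertices_edges E B). (real (card A) - 1) / 2) \<le> real s"
      by auto
    have finV: "finite V" using g by (simp add: graph_def)
    define I where "I = {x\<in>V-B. \<forall>y. {x,y}\<in>E \<longrightarrow> y\<in>B}"
    have TB: "card (V - I) \<le> 4 * s" unfolding I_def by (rule T_bound[OF g BV sumc])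
    have Iprop: "\<forall>p\<in>I. \<forall>y. {p,y} \<in> E \<longrightarrow> y \<in> B" unfolding I_def by blast
    have IB: "I \<inter> B = {}" unfolding I_def by blast
    have IV: "I \<subseteq> V" unfolding I_def by blast
    have part1: "real (card {c\<in>copies VH EH V E. v \<in> fst c}) \<le> real (2 ^ k * M ^ k) * real (card V) ^ (alpha VH EH - 1)"
      if v: "v \<in> V - B" for v
    proof -
      have "card {c\<in>copies VH EH V E. v \<in> fst c} \<le> 2 ^ card VH * (card V ^ (a - 1) * M ^ card VH)"
      proof (rule count_copies[where P = "I - {v}" and Q = "(V - I) \<union> {v}"])
        show "I - {v} \<subseteq> V" using IV by blast
        show "finite V" by (rule finV)
        show "finite (V - I \<union> {v})" using finV by simp
        have "card (V - I \<union> {v}) \<le> card (V - I) + 1" using card_Un_le[of "V - I" "{v}"] by simp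
        then show "card (V - I \<union> {v}) \<le> M" using TB unfolding M_def by simp
        show "V \<subseteq> I - {v} \<union> (V - I \<union> {v})" by blast
        show "1 \<le> card V" by (rule n1)
        show "1 \<le> M" by (rule M1)
        show "finite VH" by (rule finH)
        show "\<forall>c\<in>{c\<in>copies VH EH V E. v \<in> fst c}. \<exists>f. f \<in> VH \<rightarrow>\<^sub>E V \<and> c = Phi VH EH f \<and>
            card {x\<in>VH. f x \<in> I - {v}} \<le> a - 1"
        proof
          fix c assume c: "c \<in> {c\<in>copies VH EH V E. v \<in> fst c}"
          then obtain f where f: "f \<in> VH \<rightarrow>\<^sub>E V" "c = Phi VH EH f"
            and fwd: "\<forall>x\<in>VH. \<forall>y\<in>VH. {x,y} \<in> EH \<longrightarrow> {f x, f y} \<in> E"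
            using copy_repr[OF _ g] by blast
          have "v \<in> f ` VH" using c f(2) by (simp add: Phi_def)
          then obtain u where u: "u \<in> VH" "f u = v" by blast
          have "card {x\<in>VH. f x \<in> I - {v}} \<le> alpha VH EH - 1"
          proof (rule key2[OF gH fwd, where P = "I - {v}" and u = u])
            show "\<forall>p\<in>I - {v}. \<forall>y. {p,y} \<in> E \<longrightarrow> y \<in> B" using Iprop by blast
            show "(I - {v}) \<inter> B = {}" using IB by blast
            show "u \<in> VH" by (rule u(1))
            show "f u \<notin> B" using u v by simp
            show "f u \<notin> I - {v}" using u by simp
          qed
          then show "\<exists>f. f \<in> VH \<rightarrow>\<^sub>E V \<and> c = Phi VH EH f \<and> card {x\<in>VH. f x \<in> I - {v}} \<le> a - 1"
            using f unfolding a_def by blast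
        qed
      qed
      then show ?thesis unfolding a_def k_def[symmetric] by (rule fin_bound[unfolded a_def])
    qed
    have part2: "real (card {c\<in>copies VH EH V E. \<exists>e\<in>snd c. e \<inter> B = {}}) \<le> real (2 ^ k * M ^ k) * real (card V) ^ (alpha VH EH - 1)"
    proof -
      have "card {c\<in>copies VH EH V E. \<exists>e\<in>snd c. e \<inter> B = {}} \<le> 2 ^ card VH * (card V ^ (a - 1) * M ^ card VH)"
      proof (rule count_copies[where P = "I" and Q = "V - I"])
        show "I \<subseteq> V" by (rule IV)
        show "finite V" by (rule finV)
        show "finite (V - I)" using finV by simp
        show "card (V - I) \<le> M" using TB unfolding M_def by simp
        show "V \<subseteq> I \<union> (V - I)" by blast
        show "1 \<le> card V" by (rule n1)
        show "1 \<le> M" by (rule M1)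
        show "finite VH" by (rule finH)
        show "\<forall>c\<in>{c\<in>copies VH EH V E. \<exists>e\<in>snd c. e \<inter> B = {}}. \<exists>f. f \<in> VH \<rightarrow>\<^sub>E V \<and> c = Phi VH EH f \<and>
            card {x\<in>VH. f x \<in> I} \<le> a - 1"
        proof
          fix c assume c: "c \<in> {c\<in>copies VH EH V E. \<exists>e\<in>snd c. e \<inter> B = {}}"
          then obtain f where f: "f \<in> VH \<rightarrow>\<^sub>E V" "c = Phi VH EH f"
            and fwd: "\<forall>x\<in>VH. \<forall>y\<in>VH. {x,y} \<in> EH \<longrightarrow> {f x, f y} \<in> E"
            using copy_repr[OF _ g] by blast
          obtain e where e: "e \<in> snd c" "e \<inter> B = {}" using c by blast
          then obtain x y where xy: "e = {f x, f y}" "x \<in> VH" "y \<in> VH" "{x, y} \<in> EH"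
            using f(2) by (auto simp: Phi_def)
          have fxB: "f x \<notin> B" "f y \<notin> B" using e xy by auto
          have E1: "{f x, f y} \<in> E" using fwd xy by blast
          have fxI: "f x \<notin> I" using Iprop E1 fxB by blast
          have "card {x\<in>VH. f x \<in> I} \<le> alpha VH EH - 1"
            by (rule key2[OF gH fwd Iprop IB xy(2) fxB(1) fxI])
          then show "\<exists>f. f \<in> VH \<rightarrow>\<^sub>E V \<and> c = Phi VH EH f \<and> card {x\<in>VH. f x \<in> I} \<le> a - 1"
            using f unfolding a_def by blast
        qed
      qed
      then show ?thesis unfolding a_def k_def[symmetric] by (rule fin_bound[unfolded a_def])
    qed
    show "(\<forall>v\<in>V - B. real (card {c\<in>copies VH EH V E. v \<in> fst c})
            \<le> real (2 ^ k * M ^ k) * real (card V) ^ (alpha VH EH - 1)) \<and>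
      real (card {c\<in>copies VH EH V E. \<exists>e\<in>snd c. e \<inter> B = {}})
            \<le> real (2 ^ k * M ^ k) * real (card V) ^ (alpha VH EH - 1)"
      using part1 part2 by blast
  qed
qed

end
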